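(* Under direct parameterization $\pi_\theta(a|s)=\theta_{s,a}$, and assuming each $\sigma(P_{s,a},\cdot)$ is differentiable, for all $s\in\mathcal S$, $a\in\mathcal A$, $$\frac{\partial\,\mathbb E_{s_0\sim\rho}V^{\pi_\theta}(s_0)}{\partial\theta_{s,a}}=\frac{1}{1-\gamma}\,d^{\pi_\theta,\hat P^{\pi_\theta}}(s)\,Q^{\pi_\theta}(s,a).$$
   Context: $\mathcal S$ and $\mathcal A$ are finite sets; $\Delta(\mathcal X)$ denotes the probability simplex over a finite set $\mathcal X$. $P=\{P_{s,a}\}$ with $P_{s,a}\in\Delta(\mathcal S)$ is the nominal transition kernel, $r:\mathcal S\times\mathcal A\to[0,1]$, $\gamma\in[0,1)$, $\rho\in\Delta(\mathcal S)$. A stationary policy is a map $\pi:\mathcal S\to\Delta(\mathcal A)$. A function $\sigma:\mathbb R^{\mathcal S}\to\mathbb R$ is a convex risk measure if (i) $V'\le V$ pointwise implies $\sigma(V)\le\sigma(V')$; (ii) $\sigma(V+m)=\sigma(V)-m$ for every constant $m$; (iii) $\sigma$ is convex. For each $(s,a)$ a convex risk measure $\sigma(P_{s,a},\cdot)$ is given, with penalty $D(\hat\mu,P_{s,a}):=\sup_{V}\big(-\sigma(P_{s,a},V)-\mathbb E_{s'\sim\hat\mu}V(s')\big)$. For a policy $\pi$, $V^\pi$ is the unique solution of $V^\pi(s)=\sum_a\pi(a|s)(r(s,a)-\gamma\sigma(P_{s,a},V^\pi))$, $Q^\pi(s,a):=r(s,a)-\gamma\sigma(P_{s,a},V^\pi)$,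 $\hat P^\pi_{s,a}\in\arg\min_{\hat\mu\in\Delta(\mathcal S)}\big(D(\hat\mu,P_{s,a})+\mathbb E_{s'\sim\hat\mu}V^\pi(s')\big)$. For a policy $\pi$ and stationary kernel $K$, $d^{\pi,K}(s):=(1-\gamma)\sum_{t\ge0}\gamma^t\Pr(s_t=s)$ with $s_0\sim\rho$, $a_t\sim\pi(\cdot|s_t)$, $s_{t+1}\sim K_{s_t,a_t}$. The partial derivative is taken treating $V^{\pi_\theta}$ as a function of the vector $(\theta_{s,a})$ in a neighbourhood of its value. *)

theory Defs
  imports "HOL-Analysis.Analysis"
begin

definition is_dist :: "('x::finite \<Rightarrow> real) \<Rightarrow> bool" where
  "is_dist \<mu> \<longleftrightarrow> (\<forall>x. 0 \<le> \<mu> x) \<and> (\<Sum>x\<in>UNIV. \<mu> x) = 1"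

definition convex_risk_measure :: "(real ^ 's \<Rightarrow> real) \<Rightarrow> bool" where
  "convex_risk_measure \<sigma> \<longleftrightarrow>
     (\<forall>V V'. (\<forall>s. V' $ s \<le> V $ s) \<longrightarrow> \<sigma> V \<le> \<sigma> V') \<and>
     (\<forall>V m. \<sigma> (V + (\<chi> s. m)) = \<sigma> V - m) \<and>
     convex_on UNIV \<sigma>"

definition penalty :: "(real ^ 's \<Rightarrow> real) \<Rightarrow> ('s::finite \<Rightarrow> real) \<Rightarrow> ereal" where
  "penalty \<sigma>P \<mu> = (SUP V. ereal (- \<sigma>P V - (\<Sum>s'\<in>UNIV. \<mu> s' * V $ s')))"

definition Vpi :: "(('s::finite \<Rightarrow> real) \<Rightarrow> real ^ 's \<Rightarrow> real) \<Rightarrow> ('s \<Rightarrow> 'a::finite \<Rightarrow> 's \<Rightarrow> real)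
     \<Rightarrow> ('s \<Rightarrow> 'a \<Rightarrow> real) \<Rightarrow> real \<Rightarrow> ('s \<Rightarrow> 'a \<Rightarrow> real) \<Rightarrow> real ^ 's" where
  "Vpi \<sigma> P r \<gamma> \<pi> = (THE V. \<forall>s. V $ s = (\<Sum>a\<in>UNIV. \<pi> s a * (r s a - \<gamma> * \<sigma> (P s a) V)))"

definition Qpi :: "(('s::finite \<Rightarrow> real) \<Rightarrow> real ^ 's \<Rightarrow> real) \<Rightarrow> ('s \<Rightarrow> 'a::finite \<Rightarrow> 's \<Rightarrow> real)
     \<Rightarrow> ('s \<Rightarrow> 'a \<Rightarrow> real) \<Rightarrow> real \<Rightarrow> ('s \<Rightarrow> 'a \<Rightarrow> real) \<Rightarrow> 's \<Rightarrow> 'a \<Rightarrow> real" where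
  "Qpi \<sigma> P r \<gamma> \<pi> s a = r s a - \<gamma> * \<sigma> (P s a) (Vpi \<sigma> P r \<gamma> \<pi>)"

fun state_dist :: "('s::finite \<Rightarrow> real) \<Rightarrow> ('s \<Rightarrow> 'a::finite \<Rightarrow> real) \<Rightarrow> ('s \<Rightarrow> 'a \<Rightarrow> 's \<Rightarrow> real)
     \<Rightarrow> nat \<Rightarrow> 's \<Rightarrow> real" where
  "state_dist \<rho> \<pi> K 0 s' = \<rho> s'"
| "state_dist \<rho> \<pi> K (Suc t) s' =
     (\<Sum>s\<in>UNIV. state_dist \<rho> \<pi> K t s * (\<Sum>a\<in>UNIV. \<pi> s a * K s a s'))"

definition occupancy :: "real \<Rightarrow> ('s::finite \<Rightarrow> real) \<Rightarrow> ('s \<Rightarrow> 'a::finite \<Rightarrow> real)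
     \<Rightarrow> ('s \<Rightarrow> 'a \<Rightarrow> 's \<Rightarrow> real) \<Rightarrow> 's \<Rightarrow> real" where
  "occupancy \<gamma> \<rho> \<pi> K s = (1 - \<gamma>) * (\<Sum>t. \<gamma> ^ t * state_dist \<rho> \<pi> K t s)"

definition perturb :: "('s \<Rightarrow> 'a \<Rightarrow> real) \<Rightarrow> 's \<Rightarrow> 'a \<Rightarrow> real \<Rightarrow> 's \<Rightarrow> 'a \<Rightarrow> real" where
  "perturb \<theta> s a t = (\<lambda>s' a'. \<theta> s' a' + (if s' = s \<and> a' = a then t else 0))"

end

theory Submission
  imports Defs
begin

lemma sigma_lip:
  fixes \<sigma> :: "real ^ 's::finite \<Rightarrow> real"
  assumes cr: "convex_risk_measure \<sigma>" and b: "\<And>i. \<bar>V $ i - W $ i\<bar> \<le> b"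
  shows "\<bar>\<sigma> V - \<sigma> W\<bar> \<le> b"
proof -
  have mono: "\<And>V V'. (\<forall>s. V' $ s \<le> V $ s) \<Longrightarrow> \<sigma> V \<le> \<sigma> V'"
   and tr: "\<And>V m. \<sigma> (V + (\<chi> s. m)) = \<sigma> V - m" using cr unfolding convex_risk_measure_def by blast+
  have "\<forall>s. V $ s \<le> (W + (\<chi> s. b)) $ s" "\<forall>s. W $ s \<le> (V + (\<chi> s. b)) $ s"
    using b by (auto simp: abs_le_iff) (smt (verit) b abs_le_iff)+
  then have "\<sigma> (W + (\<chi> s. b)) \<le> \<sigma> V" "\<sigma> (V + (\<chi> s. b)) \<le> \<sigma> W" using mono by blast+
  then show ?thesis using tr[of W b] tr[of V b] by linarith
qed

definition supn :: "real ^ 's::finite \<Rightarrow> real" where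
  "supn v = Max (range (\<lambda>i. \<bar>v $ i\<bar>))"

lemma supn_ge: "\<bar>v $ i\<bar> \<le> supn v"
  unfolding supn_def by (rule Max_ge) auto

lemma supn_attained: "\<exists>i. supn v = \<bar>v $ i\<bar>"
proof -
  have "supn v \<in> range (\<lambda>i. \<bar>v $ i\<bar>)" unfolding supn_def by (rule Max_in) auto
  then show ?thesis by auto
qed

lemma supn_le_norm: "supn v \<le> norm v"
  using supn_attained[of v] component_le_norm_cart by metis

lemma norm_le_supn: "norm v \<le> real CARD('s) * supn (v :: real ^ 's::finite)"
proof -
  have "norm v \<le> (\<Sum>i\<in>UNIV. \<bar>v $ i\<bar>)" by (rule norm_le_l1_cart)
  also have "\<dots> \<le> (\<Sum>i\<in>(UNIV::'s set). supn v)" by (rule sum_mono) (rule supn_ge)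
  finally show ?thesis by simp
qed

lemma fix_exists:
  fixes T :: "real ^ 's::finite \<Rightarrow> real ^ 's"
  assumes c: "0 \<le> c" "c < 1"
    and contr: "\<And>V W b. (\<forall>i. \<bar>V $ i - W $ i\<bar> \<le> b) \<Longrightarrow> (\<forall>i. \<bar>T V $ i - T W $ i\<bar> \<le> c * b)"
  shows "\<exists>!V. T V = V"
proof -
  have it: "\<forall>i. \<bar>(T ^^ k) V $ i - (T ^^ k) W $ i\<bar> \<le> c ^ k * supn (V - W)" for k V W
  proof (induction k)
    case 0 then show ?case using supn_ge[of "V - W"] by simp
  next
    case (Suc k)
    have "\<forall>i. \<bar>T ((T ^^ k) V) $ i - T ((T ^^ k) W) $ i\<bar> \<le> c * (c ^ k * supn (V - W))"
      by (rule contr) (use Suc in auto)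
    then show ?case by (simp add: mult.assoc)
  qed
  obtain k where k: "c ^ k < 1 / real CARD('s)"
    using real_arch_pow_inv[of "1 / real CARD('s)" c] c by auto
  define d where "d = real CARD('s) * c ^ k"
  have d: "0 \<le> d" "d < 1" using k c by (auto simp: d_def field_simps)
  have "dist ((T ^^ k) V) ((T ^^ k) W) \<le> d * dist V W" for V W
  proof -
    have "dist ((T ^^ k) V) ((T ^^ k) W) \<le> real CARD('s) * supn ((T ^^ k) V - (T ^^ k) W)"
      unfolding dist_norm by (rule norm_le_supn)
    also have "supn ((T ^^ k) V - (T ^^ k) W) \<le> c ^ k * supn (V - W)"
      using it[of k V W] supn_attained[of "(T ^^ k) V - (T ^^ k) W"] by auto
    also have "c ^ k * supn (V - W) \<le> c ^ k * dist V W"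
      unfolding dist_norm using c by (intro mult_left_mono supn_le_norm) auto
    finally show ?thesis by (simp add: d_def mult_left_mono mult.assoc)
  qed
  then obtain X where X: "(T ^^ k) X = X" and Xu: "\<And>Y. (T ^^ k) Y = Y \<Longrightarrow> Y = X"
    using banach_fix_type[OF d, of "T ^^ k"] by metis
  have "(T ^^ k) (T X) = T X"
    by (metis X comp_apply funpow_swap1)
  then have TX: "T X = X" using Xu by blast
  show ?thesis
  proof (rule ex1I[of _ X])
    show "T X = X" by (rule TX)
  next
    fix Y assume "T Y = Y"
    then have "(T ^^ k) Y = Y" by (induction k) auto
    then show "Y = X" by (rule Xu)
  qed
qed

lemma lin_rep:
  fixes f' :: "real ^ 's::finite \<Rightarrow> real"
  assumes "linear f'"
  shows "f' h = (\<Sum>i\<in>UNIV. h $ i * f' (axis i 1))"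
proof -
  have "f' h = f' (\<Sum>i\<in>UNIV. h $ i *\<^sub>R axis i 1)"
    using basis_expansion[of h] by (simp add: scalar_mult_eq_scaleR)
  also have "\<dots> = (\<Sum>i\<in>UNIV. h $ i * f' (axis i 1))"
    using assms by (simp add: linear_sum linear_scale)
  finally show ?thesis .
qed

lemma dirderiv:
  fixes \<sigma> :: "real ^ 's::finite \<Rightarrow> real"
  assumes d: "(\<sigma> has_derivative f') (at V)"
  shows "((\<lambda>\<tau>. (\<sigma> (V + \<tau> *\<^sub>R h) - \<sigma> V) / \<tau>) \<longlongrightarrow> f' h) (at 0)"
proof -
  have lin: "linear f'" using d has_derivative_linear by blast
  have g: "((\<lambda>\<tau>::real. V + \<tau> *\<^sub>R h) has_derivative (\<lambda>\<tau>. \<tau> *\<^sub>R h)) (at 0)"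
    by (auto intro!: derivative_eq_intros)
  have "((\<lambda>\<tau>. \<sigma> (V + \<tau> *\<^sub>R h)) has_derivative (\<lambda>\<tau>. f' (\<tau> *\<^sub>R h))) (at 0)"
    using has_derivative_compose[OF g, of \<sigma> f'] d by simp
  moreover have "(\<lambda>\<tau>. f' (\<tau> *\<^sub>R h)) = (*) (f' h)"
    using lin by (auto simp: linear_scale)
  ultimately have "((\<lambda>\<tau>. \<sigma> (V + \<tau> *\<^sub>R h)) has_field_derivative f' h) (at 0)"
    by (simp add: has_field_derivative_def)
  then show ?thesis by (simp add: has_field_derivative_iff)
qed

lemma tangent_below:
  fixes \<sigma> :: "real ^ 's::finite \<Rightarrow> real"
  assumes cv: "convex_on UNIV \<sigma>" and d: "(\<sigma> has_derivative f') (at V)"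
  shows "\<sigma> V + f' h \<le> \<sigma> (V + h)"
proof -
  have lim: "((\<lambda>\<tau>. (\<sigma> (V + \<tau> *\<^sub>R h) - \<sigma> V) / \<tau>) \<longlongrightarrow> f' h) (at_right 0)"
    using dirderiv[OF d] by (rule filterlim_mono) (auto intro: at_le)
  have ev: "eventually (\<lambda>\<tau>. (\<sigma> (V + \<tau> *\<^sub>R h) - \<sigma> V) / \<tau> \<le> \<sigma> (V + h) - \<sigma> V) (at_right 0)"
    unfolding eventually_at_right_field
  proof (intro exI[of _ 1] conjI allI impI)
    fix \<tau> :: real assume t: "0 < \<tau>" "\<tau> < 1"
    have "V + \<tau> *\<^sub>R h = (1 - \<tau>) *\<^sub>R V + \<tau> *\<^sub>R (V + h)" by (simp add: algebra_simps)
    then have "\<sigma> (V + \<tau> *\<^sub>R h) \<le> (1 - \<tau>) * \<sigma> V + \<tau> * \<sigma> (V + h)"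
      using convex_onD[OF cv, of \<tau> V "V + h"] t by simp
    then have "\<sigma> (V + \<tau> *\<^sub>R h) - \<sigma> V \<le> (\<sigma> (V + h) - \<sigma> V) * \<tau>" by (simp add: algebra_simps)
    then show "(\<sigma> (V + \<tau> *\<^sub>R h) - \<sigma> V) / \<tau> \<le> \<sigma> (V + h) - \<sigma> V"
      using t by (simp add: pos_divide_le_eq)
  qed simp
  have "f' h \<le> \<sigma> (V + h) - \<sigma> V"
    by (rule tendsto_le[OF _ tendsto_const lim ev]) simp
  then show ?thesis by simp
qed

lemma grad_unique:
  fixes \<sigma> :: "real ^ 's::finite \<Rightarrow> real"
  assumes d: "(\<sigma> has_derivative f') (at V)"
    and sub: "\<And>h. \<sigma> V - (\<Sum>x\<in>UNIV. g x * h $ x) \<le> \<sigma> (V + h)"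
  shows "f' (axis i 1) = - g i"
proof -
  have sg: "(\<Sum>x\<in>UNIV. g x * (\<tau> *\<^sub>R axis i 1) $ x) = \<tau> * g i" for \<tau>
    by (simp add: axis_def if_distrib sum.delta cong: if_cong)
  have lim: "((\<lambda>\<tau>. (\<sigma> (V + \<tau> *\<^sub>R axis i 1) - \<sigma> V) / \<tau>) \<longlongrightarrow> f' (axis i 1)) (at 0)"
    by (rule dirderiv[OF d])
  have limr: "((\<lambda>\<tau>. (\<sigma> (V + \<tau> *\<^sub>R axis i 1) - \<sigma> V) / \<tau>) \<longlongrightarrow> f' (axis i 1)) (at_right 0)"
    using lim by (rule filterlim_mono) (auto intro: at_le)
  have liml: "((\<lambda>\<tau>. (\<sigma> (V + \<tau> *\<^sub>R axis i 1) - \<sigma> V) / \<tau>) \<longlongrightarrow> f' (axis i 1)) (at_left 0)"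
    using lim by (rule filterlim_mono) (auto intro: at_le)
  have "- g i \<le> f' (axis i 1)"
  proof (rule tendsto_le[OF _ limr tendsto_const])
    show "eventually (\<lambda>\<tau>. - g i \<le> (\<sigma> (V + \<tau> *\<^sub>R axis i 1) - \<sigma> V) / \<tau>) (at_right 0)"
      unfolding eventually_at_right_field
    proof (intro exI[of _ 1] conjI allI impI)
      fix \<tau> :: real assume tt: "0 < \<tau>" "\<tau> < 1"
      then show "- g i \<le> (\<sigma> (V + \<tau> *\<^sub>R axis i 1) - \<sigma> V) / \<tau>"
      proof -
        have "- g i * \<tau> \<le> \<sigma> (V + \<tau> *\<^sub>R axis i 1) - \<sigma> V"
          using sub[of "\<tau> *\<^sub>R axis i 1"] sg[of \<tau>] by (simp add: algebra_simps)
        then show ?thesis using tt by (simp add: pos_le_divide_eq)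
      qed
    qed simp
  qed simp
  moreover have "f' (axis i 1) \<le> - g i"
  proof (rule tendsto_le[OF _ tendsto_const liml])
    show "eventually (\<lambda>\<tau>. (\<sigma> (V + \<tau> *\<^sub>R axis i 1) - \<sigma> V) / \<tau> \<le> - g i) (at_left 0)"
      unfolding eventually_at_left_field
    proof (intro exI[of _ "-1"] conjI allI impI)
      fix \<tau> :: real assume tt: "-1 < \<tau>" "\<tau> < 0"
      then show "(\<sigma> (V + \<tau> *\<^sub>R axis i 1) - \<sigma> V) / \<tau> \<le> - g i"
      proof -
        have "- g i * \<tau> \<le> \<sigma> (V + \<tau> *\<^sub>R axis i 1) - \<sigma> V"
          using sub[of "\<tau> *\<^sub>R axis i 1"] sg[of \<tau>] by (simp add: algebra_simps)
        then show ?thesis using tt by (simp add: neg_divide_le_eq)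
      qed
    qed simp
  qed simp
  ultimately show ?thesis by simp
qed

lemma grad_Phat:
  fixes \<sigma> :: "real ^ 's::finite \<Rightarrow> real" and Ph :: "'s \<Rightarrow> real"
  assumes cr: "convex_risk_measure \<sigma>" and d: "(\<sigma> has_derivative f') (at V)"
    and min: "\<And>\<mu>. is_dist \<mu> \<Longrightarrow> penalty \<sigma> Ph + ereal (\<Sum>x\<in>UNIV. Ph x * V $ x)
        \<le> penalty \<sigma> \<mu> + ereal (\<Sum>x\<in>UNIV. \<mu> x * V $ x)"
  shows "f' h = - (\<Sum>x\<in>UNIV. Ph x * h $ x)"
proof -
  have mono: "\<And>V V'. (\<forall>s. V' $ s \<le> V $ s) \<Longrightarrow> \<sigma> V \<le> \<sigma> V'"
   and tr: "\<And>V m. \<sigma> (V + (\<chi> s. m)) = \<sigma> V - m" and cv: "convex_on UNIV \<sigma>"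
    using cr unfolding convex_risk_measure_def by blast+
  have lin: "linear f'" using d has_derivative_linear by blast
  have rep: "\<And>h. f' h = (\<Sum>i\<in>UNIV. h $ i * f' (axis i 1))" by (rule lin_rep[OF lin])
  have tan: "\<And>h. \<sigma> V + f' h \<le> \<sigma> (V + h)" by (rule tangent_below[OF cv d])
  define \<mu> where "\<mu> i = - f' (axis i 1)" for i
  have nonneg: "0 \<le> \<mu> i" for i
  proof -
    have "\<sigma> (V + axis i 1) \<le> \<sigma> V" by (rule mono) (simp add: axis_def)
    then show ?thesis using tan[of "axis i 1"] by (simp add: \<mu>_def)
  qed
  have f1: "f' (\<chi> s. 1) = -1"
  proof -
    have a: "\<sigma> V + f' (\<chi> s. 1) \<le> \<sigma> V - 1" using tan[of "\<chi> s. 1"] tr[of V 1] by simp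
    have "(\<chi> s. (-1::real)) = - (\<chi> s. 1)" by (simp add: vec_eq_iff)
    then have "f' (\<chi> s. -1) = - f' (\<chi> s. 1)" using linear_neg[OF lin] by metis
    then have b: "\<sigma> V - f' (\<chi> s. 1) \<le> \<sigma> V + 1" using tan[of "\<chi> s. -1"] tr[of V "-1"] by simp
    show ?thesis using a b by simp
  qed
  have sum\<mu>: "(\<Sum>i\<in>UNIV. \<mu> i) = 1"
    using rep[of "\<chi> s. 1"] f1 by (simp add: \<mu>_def sum_negf)
  have dist\<mu>: "is_dist \<mu>" unfolding is_dist_def using nonneg sum\<mu> by auto
  have pen\<mu>: "penalty \<sigma> \<mu> \<le> ereal (- \<sigma> V - (\<Sum>x\<in>UNIV. \<mu> x * V $ x))"
    unfolding penalty_def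
  proof (rule SUP_least)
    fix W :: "real ^ 's"
    have "\<sigma> V + f' (W - V) \<le> \<sigma> W" using tan[of "W - V"] by simp
    moreover have "f' (W - V) = - (\<Sum>x\<in>UNIV. \<mu> x * W $ x) + (\<Sum>x\<in>UNIV. \<mu> x * V $ x)"
      using rep[of "W - V"] by (simp add: \<mu>_def algebra_simps sum_subtractf sum_negf)
    ultimately show "ereal (- \<sigma> W - (\<Sum>s'\<in>UNIV. \<mu> s' * W $ s')) \<le> ereal (- \<sigma> V - (\<Sum>x\<in>UNIV. \<mu> x * V $ x))"
      by simp
  qed
  have sub: "\<sigma> V - (\<Sum>x\<in>UNIV. Ph x * h $ x) \<le> \<sigma> (V + h)" for h
  proof -
    let ?W = "V + h"
    have "ereal (- \<sigma> ?W - (\<Sum>s'\<in>UNIV. Ph s' * ?W $ s')) \<le> penalty \<sigma> Ph"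
      unfolding penalty_def by (rule SUP_upper) simp
    then have "ereal (- \<sigma> ?W - (\<Sum>s'\<in>UNIV. Ph s' * ?W $ s')) + ereal (\<Sum>x\<in>UNIV. Ph x * V $ x)
        \<le> penalty \<sigma> Ph + ereal (\<Sum>x\<in>UNIV. Ph x * V $ x)"
      by (rule add_right_mono)
    also have "\<dots> \<le> penalty \<sigma> \<mu> + ereal (\<Sum>x\<in>UNIV. \<mu> x * V $ x)" by (rule min[OF dist\<mu>])
    also have "\<dots> \<le> ereal (- \<sigma> V - (\<Sum>x\<in>UNIV. \<mu> x * V $ x)) + ereal (\<Sum>x\<in>UNIV. \<mu> x * V $ x)"
      by (rule add_right_mono[OF pen\<mu>])
    finally have "- \<sigma> ?W - (\<Sum>s'\<in>UNIV. Ph s' * ?W $ s') + (\<Sum>x\<in>UNIV. Ph x * V $ x) \<le> - \<sigma> V"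
      by simp
    then show ?thesis by (simp add: algebra_simps sum.distrib)
  qed
  have "f' (axis i 1) = - Ph i" for i by (rule grad_unique[OF d sub])
  then show ?thesis using rep[of h] by (simp add: sum_negf mult.commute)
qed

definition Top :: "(('s::finite \<Rightarrow> real) \<Rightarrow> real ^ 's \<Rightarrow> real) \<Rightarrow> ('s \<Rightarrow> 'a::finite \<Rightarrow> 's \<Rightarrow> real)
     \<Rightarrow> ('s \<Rightarrow> 'a \<Rightarrow> real) \<Rightarrow> real \<Rightarrow> ('s \<Rightarrow> 'a \<Rightarrow> real) \<Rightarrow> real ^ 's \<Rightarrow> real ^ 's" where
  "Top \<sigma> P r \<gamma> \<pi> V = (\<chi> s'. \<Sum>a\<in>UNIV. \<pi> s' a * (r s' a - \<gamma> * \<sigma> (P s' a) V))"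

lemma Vpi_char:
  assumes "\<exists>!V. Top \<sigma> P r \<gamma> \<pi> V = V"
  shows "Top \<sigma> P r \<gamma> \<pi> (Vpi \<sigma> P r \<gamma> \<pi>) = Vpi \<sigma> P r \<gamma> \<pi>"
proof -
  have eq: "(\<forall>s. V $ s = (\<Sum>a\<in>UNIV. \<pi> s a * (r s a - \<gamma> * \<sigma> (P s a) V))) \<longleftrightarrow> Top \<sigma> P r \<gamma> \<pi> V = V" for V
    by (auto simp: Top_def vec_eq_iff)
  have "Vpi \<sigma> P r \<gamma> \<pi> = (THE V. Top \<sigma> P r \<gamma> \<pi> V = V)"
    unfolding Vpi_def eq ..
  then show ?thesis using theI'[OF assms] by simp
qed

lemma Top_contr:
  assumes cr: "\<And>s a. convex_risk_measure (\<sigma> (P s a))" and g: "0 \<le> \<gamma>"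
    and b: "\<forall>i. \<bar>V $ i - W $ i\<bar> \<le> b"
  shows "\<bar>Top \<sigma> P r \<gamma> \<pi> V $ j - Top \<sigma> P r \<gamma> \<pi> W $ j\<bar> \<le> \<gamma> * (\<Sum>a\<in>UNIV. \<bar>\<pi> j a\<bar>) * b"
proof -
  have "Top \<sigma> P r \<gamma> \<pi> V $ j - Top \<sigma> P r \<gamma> \<pi> W $ j
      = (\<Sum>a\<in>UNIV. \<pi> j a * (- \<gamma>) * (\<sigma> (P j a) V - \<sigma> (P j a) W))"
    by (simp add: Top_def sum_subtractf[symmetric] algebra_simps)
  also have "\<bar>\<dots>\<bar> \<le> (\<Sum>a\<in>UNIV. \<bar>\<pi> j a * (- \<gamma>) * (\<sigma> (P j a) V - \<sigma> (P j a) W)\<bar>)"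
    by (rule sum_abs)
  also have "\<dots> \<le> (\<Sum>a\<in>UNIV. \<gamma> * \<bar>\<pi> j a\<bar> * b)"
  proof (rule sum_mono)
    fix a
    have "\<bar>\<sigma> (P j a) V - \<sigma> (P j a) W\<bar> \<le> b" using sigma_lip[OF cr] b by blast
    then show "\<bar>\<pi> j a * (- \<gamma>) * (\<sigma> (P j a) V - \<sigma> (P j a) W)\<bar> \<le> \<gamma> * \<bar>\<pi> j a\<bar> * b"
    proof -
      have "\<bar>\<pi> j a\<bar> * (\<gamma> * \<bar>\<sigma> (P j a) V - \<sigma> (P j a) W\<bar>) \<le> \<bar>\<pi> j a\<bar> * (\<gamma> * b)"
        using g \<open>\<bar>\<sigma> (P j a) V - \<sigma> (P j a) W\<bar> \<le> b\<close> by (intro mult_left_mono) auto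
      then show ?thesis using g by (simp add: abs_mult ac_simps)
    qed
  qed
  also have "\<dots> = \<gamma> * (\<Sum>a\<in>UNIV. \<bar>\<pi> j a\<bar>) * b"
    by (simp add: sum_distrib_left sum_distrib_right mult.assoc)
  finally show ?thesis .
qed

lemma perturb_abs_sum:
  assumes "is_dist (\<theta> s')"
  shows "(\<Sum>a'\<in>UNIV. \<bar>perturb \<theta> s a t s' a'\<bar>) \<le> 1 + \<bar>t\<bar>"
proof -
  have "(\<Sum>a'\<in>UNIV. \<bar>perturb \<theta> s a t s' a'\<bar>)
      \<le> (\<Sum>a'\<in>UNIV. \<theta> s' a' + \<bar>if s' = s \<and> a' = a then t else 0\<bar>)"
  proof (rule sum_mono)
    fix a'
    have "0 \<le> \<theta> s' a'" using assms by (simp add: is_dist_def)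
    then show "\<bar>perturb \<theta> s a t s' a'\<bar> \<le> \<theta> s' a' + \<bar>if s' = s \<and> a' = a then t else 0\<bar>"
      using abs_triangle_ineq[of "\<theta> s' a'" "if s' = s \<and> a' = a then t else 0"] by (simp add: perturb_def)
  qed
  also have "\<dots> = 1 + (if s' = s then \<bar>t\<bar> else 0)"
  proof -
    have "(\<Sum>a'\<in>UNIV. \<bar>if s' = s \<and> a' = a then t else 0\<bar>) = (if s' = s then \<bar>t\<bar> else 0)"
    proof (cases "s' = s")
      case True
      have "(\<Sum>a'\<in>UNIV. \<bar>if a' = a then t else 0\<bar>) = (\<Sum>a'\<in>UNIV. if a' = a then \<bar>t\<bar> else 0)"
        by (rule sum.cong) auto
      then show ?thesis using True by simp
    qed simp
    then show ?thesis using assms by (simp add: sum.distrib is_dist_def)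
  qed
  also have "\<dots> \<le> 1 + \<bar>t\<bar>" by simp
  finally show ?thesis .
qed

lemma sd_dist:
  assumes "is_dist \<rho>" "\<And>s. is_dist (\<pi> s)" "\<And>s a. is_dist (K s a)"
  shows "(\<forall>y. 0 \<le> state_dist \<rho> \<pi> K k y) \<and> (\<Sum>y\<in>UNIV. state_dist \<rho> \<pi> K k y) = 1"
proof (induction k)
  case 0 then show ?case using assms(1) by (simp add: is_dist_def)
next
  case (Suc k)
  have nn: "0 \<le> state_dist \<rho> \<pi> K (Suc k) y" for y
    using Suc assms(2,3) unfolding is_dist_def
    by (auto intro!: sum_nonneg mult_nonneg_nonneg)
  have "(\<Sum>y\<in>UNIV. state_dist \<rho> \<pi> K (Suc k) y)
      = (\<Sum>s\<in>UNIV. state_dist \<rho> \<pi> K k s * (\<Sum>a\<in>UNIV. \<pi> s a * (\<Sum>y\<in>UNIV. K s a y)))"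
  proof -
    have "(\<Sum>y\<in>UNIV. state_dist \<rho> \<pi> K (Suc k) y)
       = (\<Sum>s\<in>UNIV. \<Sum>y\<in>UNIV. state_dist \<rho> \<pi> K k s * (\<Sum>a\<in>UNIV. \<pi> s a * K s a y))"
      by (simp only: state_dist.simps) (rule sum.swap)
    also have "\<dots> = (\<Sum>s\<in>UNIV. state_dist \<rho> \<pi> K k s * (\<Sum>a\<in>UNIV. \<pi> s a * (\<Sum>y\<in>UNIV. K s a y)))"
    proof (rule sum.cong[OF refl])
      fix s
      have "(\<Sum>y\<in>UNIV. \<Sum>a\<in>UNIV. \<pi> s a * K s a y) = (\<Sum>a\<in>UNIV. \<Sum>y\<in>UNIV. \<pi> s a * K s a y)"
        by (rule sum.swap)
      then show "(\<Sum>y\<in>UNIV. state_dist \<rho> \<pi> K k s * (\<Sum>a\<in>UNIV. \<pi> s a * K s a y))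
          = state_dist \<rho> \<pi> K k s * (\<Sum>a\<in>UNIV. \<pi> s a * (\<Sum>y\<in>UNIV. K s a y))"
        by (simp add: sum_distrib_left[symmetric])
    qed
    finally show ?thesis .
  qed
  also have "\<dots> = (\<Sum>s\<in>UNIV. state_dist \<rho> \<pi> K k s)"
    using assms(2,3) by (simp add: is_dist_def)
  finally show ?case using nn Suc by simp
qed

lemma w_eq:
  fixes \<gamma> :: real
  assumes g: "0 \<le> \<gamma>" "\<gamma> < 1" and d: "is_dist \<rho>" "\<And>s. is_dist (\<pi> s)" "\<And>s a. is_dist (K s a)"
  defines "w \<equiv> (\<lambda>y. \<Sum>k. \<gamma> ^ k * state_dist \<rho> \<pi> K k y)"
  shows "summable (\<lambda>k. \<gamma> ^ k * state_dist \<rho> \<pi> K k y)"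
    and "w y = \<rho> y + \<gamma> * (\<Sum>i\<in>UNIV. w i * (\<Sum>a\<in>UNIV. \<pi> i a * K i a y))"
proof -
  have sm: "summable (\<lambda>k. \<gamma> ^ k * state_dist \<rho> \<pi> K k y)" for y
  proof (rule summable_comparison_test'[OF summable_geometric[of \<gamma>]])
    fix k
    have "0 \<le> state_dist \<rho> \<pi> K k y" using sd_dist[of \<rho> \<pi> K, OF d] by blast
    moreover have "state_dist \<rho> \<pi> K k y \<le> 1"
    proof -
      have "state_dist \<rho> \<pi> K k y \<le> (\<Sum>y\<in>UNIV. state_dist \<rho> \<pi> K k y)"
        by (rule member_le_sum) (use sd_dist[of \<rho> \<pi> K, OF d] in auto)
      then show ?thesis using sd_dist[of \<rho> \<pi> K, OF d] by simp
    qed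
    ultimately show "norm (\<gamma> ^ k * state_dist \<rho> \<pi> K k y) \<le> \<gamma> ^ k"
      using g by (simp add: abs_mult mult_left_le)
  qed (use g in auto)
  then show "summable (\<lambda>k. \<gamma> ^ k * state_dist \<rho> \<pi> K k y)" .
  have "w y = \<rho> y + (\<Sum>k. \<gamma> ^ Suc k * state_dist \<rho> \<pi> K (Suc k) y)"
    using suminf_split_head[OF sm[of y]] by (simp add: w_def)
  also have "(\<Sum>k. \<gamma> ^ Suc k * state_dist \<rho> \<pi> K (Suc k) y)
      = (\<Sum>k. \<gamma> * (\<Sum>i\<in>UNIV. (\<gamma> ^ k * state_dist \<rho> \<pi> K k i) * (\<Sum>a\<in>UNIV. \<pi> i a * K i a y)))"
    by (simp add: sum_distrib_left mult.assoc mult.left_commute)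
  also have "\<dots> = \<gamma> * (\<Sum>k. (\<Sum>i\<in>UNIV. (\<gamma> ^ k * state_dist \<rho> \<pi> K k i) * (\<Sum>a\<in>UNIV. \<pi> i a * K i a y)))"
    by (rule suminf_mult) (auto intro!: summable_sum summable_mult2 sm)
  also have "(\<Sum>k. (\<Sum>i\<in>UNIV. (\<gamma> ^ k * state_dist \<rho> \<pi> K k i) * (\<Sum>a\<in>UNIV. \<pi> i a * K i a y)))
      = (\<Sum>i\<in>UNIV. w i * (\<Sum>a\<in>UNIV. \<pi> i a * K i a y))"
    by (subst suminf_sum) (auto intro!: summable_mult2 sm simp: w_def suminf_mult2[OF sm])
  finally show "w y = \<rho> y + \<gamma> * (\<Sum>i\<in>UNIV. w i * (\<Sum>a\<in>UNIV. \<pi> i a * K i a y))" .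
qed

theorem mainTheorem7:
  fixes P :: "'s::finite \<Rightarrow> 'a::finite \<Rightarrow> 's \<Rightarrow> real"
    and \<sigma> :: "('s \<Rightarrow> real) \<Rightarrow> real ^ 's \<Rightarrow> real"
    and r :: "'s \<Rightarrow> 'a \<Rightarrow> real"
    and \<gamma> :: real
    and \<rho> :: "'s \<Rightarrow> real"
    and \<theta> :: "'s \<Rightarrow> 'a \<Rightarrow> real"
    and Phat :: "'s \<Rightarrow> 'a \<Rightarrow> 's \<Rightarrow> real"
    and s :: 's and a :: 'a
  assumes P_dist: "\<And>s a. is_dist (P s a)"
    and r_range: "\<And>s a. 0 \<le> r s a \<and> r s a \<le> 1"
    and gamma: "0 \<le> \<gamma>" "\<gamma> < 1"
    and rho: "is_dist \<rho>"
    and risk: "\<And>s a. convex_risk_measure (\<sigma> (P s a))"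
    and diff: "\<And>s a V. \<sigma> (P s a) differentiable (at V)"
    and policy: "\<And>s'. is_dist (\<theta> s')"
    and Phat_dist: "\<And>s' a'. is_dist (Phat s' a')"
    and Phat_min: "\<And>s' a' \<mu>. is_dist \<mu> \<Longrightarrow>
        penalty (\<sigma> (P s' a')) (Phat s' a')
          + ereal (\<Sum>x\<in>UNIV. Phat s' a' x * Vpi \<sigma> P r \<gamma> \<theta> $ x)
        \<le> penalty (\<sigma> (P s' a')) \<mu> + ereal (\<Sum>x\<in>UNIV. \<mu> x * Vpi \<sigma> P r \<gamma> \<theta> $ x)"
  shows "((\<lambda>t. \<Sum>s0\<in>UNIV. \<rho> s0 * Vpi \<sigma> P r \<gamma> (perturb \<theta> s a t) $ s0)
           has_real_derivative
           (1 / (1 - \<gamma>)) * occupancy \<gamma> \<rho> \<theta> Phat s * Qpi \<sigma> P r \<gamma> \<theta> s a) (at 0)"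
proof -
  define c where "c = (1 + \<gamma>) / 2"
  define \<delta> where "\<delta> = (1 - \<gamma>) / 2"
  have c: "0 \<le> c" "c < 1" "0 < \<delta>" using gamma by (auto simp: c_def \<delta>_def)
  define \<pi> where "\<pi> t = perturb \<theta> s a t" for t
  have \<pi>0: "\<pi> 0 = \<theta>" by (auto simp: \<pi>_def perturb_def)
  have ctr: "\<forall>j. \<bar>Top \<sigma> P r \<gamma> (\<pi> t) V $ j - Top \<sigma> P r \<gamma> (\<pi> t) W $ j\<bar> \<le> c * b"
    if t: "\<bar>t\<bar> \<le> \<delta>" and b: "\<forall>i. \<bar>V $ i - W $ i\<bar> \<le> b" for t V W b
  proof
    fix j
    have b0: "0 \<le> b" using b by (meson abs_ge_zero order_trans)
    have "\<bar>Top \<sigma> P r \<gamma> (\<pi> t) V $ j - Top \<sigma> P r \<gamma> (\<pi> t) W $ j\<bar>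
        \<le> \<gamma> * (\<Sum>a\<in>UNIV. \<bar>\<pi> t j a\<bar>) * b"
      by (rule Top_contr[of \<sigma> P, OF risk gamma(1) b])
    also have "\<dots> \<le> \<gamma> * (1 + \<bar>t\<bar>) * b"
      using perturb_abs_sum[of \<theta> j s a t, OF policy] gamma b0
      by (simp add: \<pi>_def mult_left_mono mult_right_mono)
    also have "\<dots> \<le> c * b"
    proof (rule mult_right_mono[OF _ b0])
      have "\<gamma> * \<bar>t\<bar> \<le> \<bar>t\<bar>" using gamma by (simp add: mult_left_le_one_le)
      then show "\<gamma> * (1 + \<bar>t\<bar>) \<le> c" using t by (simp add: c_def \<delta>_def algebra_simps)
    qed
    finally show "\<bar>Top \<sigma> P r \<gamma> (\<pi> t) V $ j - Top \<sigma> P r \<gamma> (\<pi> t) W $ j\<bar> \<le> c * b" .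
  qed
  have uniq: "\<exists>!V. Top \<sigma> P r \<gamma> (\<pi> t) V = V" if "\<bar>t\<bar> \<le> \<delta>" for t
    by (rule fix_exists[OF c(1,2)]) (rule ctr[OF that], simp)
  define V where "V t = Vpi \<sigma> P r \<gamma> (\<pi> t)" for t
  have fixV: "Top \<sigma> P r \<gamma> (\<pi> t) (V t) = V t" if "\<bar>t\<bar> \<le> \<delta>" for t
    unfolding V_def by (rule Vpi_char[OF uniq[OF that]])
  define V0 where "V0 = Vpi \<sigma> P r \<gamma> \<theta>"
  have V00: "V 0 = V0" by (simp add: V_def V0_def \<pi>0)
  have fix0: "Top \<sigma> P r \<gamma> \<theta> V0 = V0" using fixV[of 0] c V00 \<pi>0 by simp
  define Q where "Q = r s a - \<gamma> * \<sigma> (P s a) V0"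
  define L where "L = \<bar>Q\<bar> / (1 - c)"
  have diffTop: "Top \<sigma> P r \<gamma> (\<pi> t) W $ i - Top \<sigma> P r \<gamma> \<theta> W $ i
      = (if i = s then t * (r s a - \<gamma> * \<sigma> (P s a) W) else 0)" for t W i
  proof -
    have "Top \<sigma> P r \<gamma> (\<pi> t) W $ i - Top \<sigma> P r \<gamma> \<theta> W $ i
       = (\<Sum>a'\<in>UNIV. (if i = s \<and> a' = a then t else 0) * (r i a' - \<gamma> * \<sigma> (P i a') W))"
      by (simp add: Top_def \<pi>_def perturb_def sum_subtractf[symmetric] algebra_simps)
    also have "\<dots> = (\<Sum>a'\<in>UNIV. if a' = a then (if i = s then t * (r s a - \<gamma> * \<sigma> (P s a) W) else 0) else 0)"
      by (rule sum.cong) auto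
    finally show ?thesis by simp
  qed
  have lip: "\<bar>V t $ i - V0 $ i\<bar> \<le> L * \<bar>t\<bar>" if t: "\<bar>t\<bar> \<le> \<delta>" for t i
  proof -
    define b where "b = supn (V t - V0)"
    obtain j where j: "b = \<bar>(V t - V0) $ j\<bar>" using supn_attained unfolding b_def by blast
    have bi: "\<forall>i. \<bar>V t $ i - V0 $ i\<bar> \<le> b" using supn_ge[of "V t - V0"] by (simp add: b_def)
    have A: "\<bar>Top \<sigma> P r \<gamma> (\<pi> t) (V t) $ j - Top \<sigma> P r \<gamma> (\<pi> t) V0 $ j\<bar> \<le> c * b"
      using ctr[OF t bi] by blast
    have B: "\<bar>Top \<sigma> P r \<gamma> (\<pi> t) V0 $ j - V0 $ j\<bar> \<le> \<bar>t\<bar> * \<bar>Q\<bar>"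
      using diffTop[of t V0 j] fix0 by (simp add: Q_def abs_mult)
    have "b = \<bar>(Top \<sigma> P r \<gamma> (\<pi> t) (V t) $ j - Top \<sigma> P r \<gamma> (\<pi> t) V0 $ j)
              + (Top \<sigma> P r \<gamma> (\<pi> t) V0 $ j - V0 $ j)\<bar>"
      using j fixV[OF t] by simp
    also have "\<dots> \<le> c * b + \<bar>t\<bar> * \<bar>Q\<bar>" using A B by linarith
    finally have "b * (1 - c) \<le> \<bar>t\<bar> * \<bar>Q\<bar>" by (simp add: algebra_simps)
    then have "b \<le> L * \<bar>t\<bar>" using c by (simp add: L_def field_simps)
    then show ?thesis using bi by (meson order_trans)
  qed
  have ev: "eventually Pr (at (0::real))" if "\<And>t. t \<noteq> 0 \<Longrightarrow> \<bar>t\<bar> < \<delta> \<Longrightarrow> Pr t" for Pr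
    unfolding eventually_at using c(3) that by (auto simp: dist_real_def)
  define N where "N = real CARD('s)"
  have N0: "0 \<le> N" by (simp add: N_def)
  have L0: "0 \<le> L" using c by (simp add: L_def)
  have normV: "norm (V t - V0) \<le> N * L * \<bar>t\<bar>" if "\<bar>t\<bar> \<le> \<delta>" for t
  proof -
    have "norm (V t - V0) \<le> (\<Sum>i\<in>UNIV. \<bar>(V t - V0) $ i\<bar>)" by (rule norm_le_l1_cart)
    also have "\<dots> \<le> (\<Sum>i\<in>(UNIV::'s set). L * \<bar>t\<bar>)" by (rule sum_mono) (use lip[OF that] in simp)
    finally show ?thesis by (simp add: N_def)
  qed
  have Vlim: "(V \<longlongrightarrow> V0) (at 0)"
  proof (rule LIM_zero_cancel)
    show "((\<lambda>t. V t - V0) \<longlongrightarrow> 0) (at 0)"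
    proof (rule tendsto_0_le[where K = "N * L"])
      show "((\<lambda>t::real. t) \<longlongrightarrow> 0) (at 0)" by (rule tendsto_ident_at)
      show "eventually (\<lambda>t. norm (V t - V0) \<le> norm t * (N * L)) (at 0)"
        by (rule ev) (use normV in \<open>auto simp: mult.commute\<close>)
    qed
  qed
  have "\<forall>s' a'. \<exists>F. (\<sigma> (P s' a') has_derivative F) (at V0)" using diff by (auto simp: differentiable_def)
  then obtain F where F: "\<And>s' a'. (\<sigma> (P s' a') has_derivative F s' a') (at V0)" by metis
  have gradF: "F s' a' h = - (\<Sum>x\<in>UNIV. Phat s' a' x * h $ x)" for s' a' h
    by (rule grad_Phat[OF risk F]) (rule Phat_min[folded V0_def])
  define R where "R s' a' y = ((\<sigma> (P s' a') y - \<sigma> (P s' a') V0) - F s' a' (y - V0)) /\<^sub>R norm (y - V0)" for s' a' y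
  have Rlim: "((\<lambda>t. R s' a' (V t)) \<longlongrightarrow> 0) (at 0)" for s' a'
  proof -
    have lin: "linear (F s' a')" using F has_derivative_linear by blast
    have "(R s' a' \<longlongrightarrow> 0) (at V0)"
      using F[of s' a'] unfolding has_derivative_at_within R_def by blast
    moreover have "R s' a' V0 = 0" by (simp add: R_def)
    ultimately have "isCont (R s' a') V0" by (simp add: isCont_def)
    from isCont_tendsto_compose[OF this Vlim] show ?thesis using \<open>R s' a' V0 = 0\<close> by simp
  qed
  define E where "E t s' a' = (\<sigma> (P s' a') (V t) - \<sigma> (P s' a') V0 - F s' a' (V t - V0)) / t" for t s' a'
  have Elim: "((\<lambda>t. E t s' a') \<longlongrightarrow> 0) (at 0)" for s' a'
  proof (rule tendsto_0_le[OF Rlim[of s' a'], where K = "N * L"])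
    show "eventually (\<lambda>t. norm (E t s' a') \<le> norm (R s' a' (V t)) * (N * L)) (at 0)"
    proof (rule ev)
      fix t :: real assume t0: "t \<noteq> 0" and t: "\<bar>t\<bar> < \<delta>"
      have lin: "linear (F s' a')" using F has_derivative_linear by blast
      have num: "\<sigma> (P s' a') (V t) - \<sigma> (P s' a') V0 - F s' a' (V t - V0) = R s' a' (V t) * norm (V t - V0)"
      proof (cases "V t = V0")
        case True then show ?thesis using linear_0[OF lin] by simp
      next
        case False then show ?thesis by (simp add: R_def)
      qed
      have "norm (E t s' a') = \<bar>R s' a' (V t)\<bar> * (norm (V t - V0) / \<bar>t\<bar>)"
        by (simp add: E_def num abs_mult)
      also have "\<dots> \<le> \<bar>R s' a' (V t)\<bar> * (N * L)"
      proof (rule mult_left_mono)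
        show "norm (V t - V0) / \<bar>t\<bar> \<le> N * L" using normV[of t] t t0 by (simp add: divide_le_eq)
      qed simp
      finally show "norm (E t s' a') \<le> norm (R s' a' (V t)) * (N * L)" by simp
    qed
  qed
  have qlim: "((\<lambda>t. r s a - \<gamma> * \<sigma> (P s a) (V t)) \<longlongrightarrow> Q) (at 0)"
  proof -
    have "isCont (\<sigma> (P s a)) V0" using has_derivative_continuous[OF F[of s a]] by simp
    from isCont_tendsto_compose[OF this Vlim] show ?thesis unfolding Q_def
      by (intro tendsto_intros)
  qed
  define w where "w y = (\<Sum>k. \<gamma> ^ k * state_dist \<rho> \<theta> Phat k y)" for y
  define M where "M i x = (\<Sum>a'\<in>UNIV. \<theta> i a' * Phat i a' x)" for i x
  have weq: "w y = \<rho> y + \<gamma> * (\<Sum>i\<in>UNIV. w i * M i y)" for y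
    unfolding w_def M_def by (rule w_eq(2)[OF gamma rho policy Phat_dist])
  define G where "G t i = - \<gamma> * (\<Sum>a'\<in>UNIV. \<theta> i a' * E t i a')
      + (if i = s then r s a - \<gamma> * \<sigma> (P s a) (V t) else 0)" for t i
  define f where "f t = (\<Sum>s0\<in>UNIV. \<rho> s0 * V t $ s0)" for t
  have key: "(f t - f 0) / (t - 0) = (\<Sum>i\<in>UNIV. w i * G t i)" if t0: "t \<noteq> 0" and t: "\<bar>t\<bar> < \<delta>" for t
  proof -
    define Dv where "Dv i = V t $ i - V0 $ i" for i
    have s1: "Dv i = (\<Sum>a'\<in>UNIV. \<theta> i a' * (- \<gamma>) * (\<sigma> (P i a') (V t) - \<sigma> (P i a') V0))
        + (if i = s then t * (r s a - \<gamma> * \<sigma> (P s a) (V t)) else 0)" for i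
    proof -
      have "V t $ i = Top \<sigma> P r \<gamma> \<theta> (V t) $ i + (if i = s then t * (r s a - \<gamma> * \<sigma> (P s a) (V t)) else 0)"
        using fixV[of t] t diffTop[of t "V t" i] by simp
      moreover have "Top \<sigma> P r \<gamma> \<theta> (V t) $ i - V0 $ i
          = (\<Sum>a'\<in>UNIV. \<theta> i a' * (- \<gamma>) * (\<sigma> (P i a') (V t) - \<sigma> (P i a') V0))"
      proof -
        have "Top \<sigma> P r \<gamma> \<theta> (V t) $ i - V0 $ i = Top \<sigma> P r \<gamma> \<theta> (V t) $ i - Top \<sigma> P r \<gamma> \<theta> V0 $ i"
          using fix0 by simp
        then show ?thesis by (simp add: Top_def sum_subtractf[symmetric] algebra_simps)
      qed
      ultimately show ?thesis by (simp add: Dv_def)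
    qed
    have s2: "\<sigma> (P i a') (V t) - \<sigma> (P i a') V0 = - (\<Sum>x\<in>UNIV. Phat i a' x * Dv x) + t * E t i a'" for i a'
      using t0 by (simp add: E_def gradF Dv_def)
    have s3: "Dv i - \<gamma> * (\<Sum>x\<in>UNIV. M i x * Dv x) = t * G t i" for i
    proof -
      have "(\<Sum>a'\<in>UNIV. \<theta> i a' * (- \<gamma>) * (\<sigma> (P i a') (V t) - \<sigma> (P i a') V0))
          = \<gamma> * (\<Sum>a'\<in>UNIV. \<theta> i a' * (\<Sum>x\<in>UNIV. Phat i a' x * Dv x)) - t * \<gamma> * (\<Sum>a'\<in>UNIV. \<theta> i a' * E t i a')"
      proof -
        have "(\<Sum>a'\<in>UNIV. \<theta> i a' * (- \<gamma>) * (\<sigma> (P i a') (V t) - \<sigma> (P i a') V0))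
          = (\<Sum>a'\<in>UNIV. \<gamma> * (\<theta> i a' * (\<Sum>x\<in>UNIV. Phat i a' x * Dv x)) - t * \<gamma> * (\<theta> i a' * E t i a'))"
          by (rule sum.cong[OF refl]) (simp add: s2 algebra_simps)
        then show ?thesis by (simp add: sum_subtractf sum_distrib_left[symmetric])
      qed
      moreover have "(\<Sum>a'\<in>UNIV. \<theta> i a' * (\<Sum>x\<in>UNIV. Phat i a' x * Dv x)) = (\<Sum>x\<in>UNIV. M i x * Dv x)"
      proof -
        have "(\<Sum>a'\<in>UNIV. \<theta> i a' * (\<Sum>x\<in>UNIV. Phat i a' x * Dv x))
            = (\<Sum>a'\<in>UNIV. \<Sum>x\<in>UNIV. \<theta> i a' * Phat i a' x * Dv x)"
          by (simp add: sum_distrib_left mult.assoc)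
        also have "\<dots> = (\<Sum>x\<in>UNIV. \<Sum>a'\<in>UNIV. \<theta> i a' * Phat i a' x * Dv x)" by (rule sum.swap)
        also have "\<dots> = (\<Sum>x\<in>UNIV. M i x * Dv x)" by (simp add: M_def sum_distrib_right)
        finally show ?thesis .
      qed
      ultimately have h2: "(\<Sum>a'\<in>UNIV. \<theta> i a' * (- \<gamma>) * (\<sigma> (P i a') (V t) - \<sigma> (P i a') V0))
          = \<gamma> * (\<Sum>x\<in>UNIV. M i x * Dv x) - t * \<gamma> * (\<Sum>a'\<in>UNIV. \<theta> i a' * E t i a')" by simp
      define A where "A = (\<Sum>a'\<in>UNIV. \<theta> i a' * (- \<gamma>) * (\<sigma> (P i a') (V t) - \<sigma> (P i a') V0))"
      define S where "S = (\<Sum>x\<in>UNIV. M i x * Dv x)"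
      define Et where "Et = (\<Sum>a'\<in>UNIV. \<theta> i a' * E t i a')"
      define q where "q = r s a - \<gamma> * \<sigma> (P s a) (V t)"
      have h1: "Dv i = A + (if i = s then t * q else 0)" using s1[of i] by (simp add: A_def q_def)
      have h2': "A = \<gamma> * S - t * \<gamma> * Et" using h2 by (simp add: A_def S_def Et_def)
      have "G t i = - \<gamma> * Et + (if i = s then q else 0)" by (simp add: G_def Et_def q_def)
      moreover have "Dv i - \<gamma> * S = t * (- \<gamma> * Et + (if i = s then q else 0))"
        using h1 h2' by (cases "i = s") (simp_all add: algebra_simps)
      ultimately show ?thesis by (simp add: S_def)
    qed
    have "f t - f 0 = (\<Sum>y\<in>UNIV. \<rho> y * Dv y)"
      by (simp add: f_def V00 Dv_def sum_subtractf[symmetric] algebra_simps)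
    also have "\<dots> = (\<Sum>y\<in>UNIV. w y * Dv y) - \<gamma> * (\<Sum>y\<in>UNIV. \<Sum>i\<in>UNIV. w i * M i y * Dv y)"
    proof -
      have "(\<Sum>y\<in>UNIV. \<rho> y * Dv y) = (\<Sum>y\<in>UNIV. w y * Dv y - \<gamma> * (\<Sum>i\<in>UNIV. w i * M i y * Dv y))"
      proof (rule sum.cong[OF refl])
        fix y
        show "\<rho> y * Dv y = w y * Dv y - \<gamma> * (\<Sum>i\<in>UNIV. w i * M i y * Dv y)"
          using weq[of y] by (simp add: algebra_simps sum_distrib_left)
      qed
      then show ?thesis by (simp add: sum_subtractf sum_distrib_left)
    qed
    also have "(\<Sum>y\<in>UNIV. \<Sum>i\<in>UNIV. w i * M i y * Dv y) = (\<Sum>i\<in>UNIV. w i * (\<Sum>y\<in>UNIV. M i y * Dv y))"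
      by (subst sum.swap) (simp add: sum_distrib_left mult.assoc)
    also have "(\<Sum>y\<in>UNIV. w y * Dv y) - \<gamma> * (\<Sum>i\<in>UNIV. w i * (\<Sum>y\<in>UNIV. M i y * Dv y))
        = (\<Sum>i\<in>UNIV. w i * (Dv i - \<gamma> * (\<Sum>y\<in>UNIV. M i y * Dv y)))"
      by (simp add: algebra_simps sum_subtractf sum_distrib_left)
    also have "\<dots> = t * (\<Sum>i\<in>UNIV. w i * G t i)"
      by (simp only: s3) (simp add: sum_distrib_left algebra_simps)
    finally show ?thesis using t0 by simp
  qed
  have lim: "((\<lambda>t. \<Sum>i\<in>UNIV. w i * G t i) \<longlongrightarrow> (\<Sum>i\<in>UNIV. w i * (- \<gamma> * (\<Sum>a'\<in>UNIV. \<theta> i a' * 0)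
      + (if i = s then Q else 0)))) (at 0)"
    unfolding G_def by (intro tendsto_intros Elim qlim) (simp add: qlim)
  have target: "1 / (1 - \<gamma>) * occupancy \<gamma> \<rho> \<theta> Phat s * Qpi \<sigma> P r \<gamma> \<theta> s a
      = (\<Sum>i\<in>UNIV. w i * (- \<gamma> * (\<Sum>a'\<in>UNIV. \<theta> i a' * 0) + (if i = s then Q else 0)))"
    using gamma by (simp add: occupancy_def Qpi_def Q_def V0_def w_def if_distrib cong: if_cong)
  have fe: "(\<lambda>t. \<Sum>s0\<in>UNIV. \<rho> s0 * Vpi \<sigma> P r \<gamma> (perturb \<theta> s a t) $ s0) = f"
    by (rule ext) (simp add: f_def V_def \<pi>_def)
  show ?thesis unfolding fe has_field_derivative_iff target
  proof (subst tendsto_cong)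
    show "eventually (\<lambda>t. (f t - f 0) / (t - 0) = (\<Sum>i\<in>UNIV. w i * G t i)) (at 0)"
      by (rule ev) (rule key)
  qed (rule lim)
qed

end
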